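(* Let $E\subset\mathbb R^2$ be a Borel set that is (the graph of) an equivalence relation on $\mathbb R$, and let $\mathcal E$ be the $\sigma$-field of all Borel sets $A\subset\mathbb R$ that are $E$-saturated, i.e. $(x,y)\in E$ implies ($x\in A\iff y\in A$). Then for all probability measures $\mu_1,\mu_2$ on $\mathbb R$, $I_{\mu_1,\mu_2}(E)=1-\sup_{A\in\mathcal E}|\mu_1(A)-\mu_2(A)|$.
   Context: $I_{\mu_1,\mu_2}(E)$ denotes the infimum of $\mu_1(B_1)+\mu_2(B_2)$ over all Borel sets $B_1,B_2\subset\mathbb R$ such that $E\subset(B_1\times\mathbb R)\cup(\mathbb R\times B_2)$. *)

theory Defs
  imports "HOL-Probability.Probability"
begin

definition cover_inf :: "real measure \<Rightarrow> real measure \<Rightarrow> (real \<times> real) set \<Rightarrow> real" where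
  "cover_inf \<mu>1 \<mu>2 E = Inf {measure \<mu>1 B1 + measure \<mu>2 B2 | B1 B2.
      B1 \<in> sets (borel :: real measure) \<and> B2 \<in> sets (borel :: real measure) \<and>
      E \<subseteq> (B1 \<times> UNIV) \<union> (UNIV \<times> B2)}"

definition saturated_borel :: "(real \<times> real) set \<Rightarrow> real set set" where
  "saturated_borel E = {A \<in> sets (borel :: real measure). \<forall>(x, y) \<in> E. (x \<in> A \<longleftrightarrow> y \<in> A)}"

end

theory Submission
  imports Defs
begin

definition agr :: "nat \<Rightarrow> (nat \<Rightarrow> nat) \<Rightarrow> (nat \<Rightarrow> nat) \<Rightarrow> bool" where
  "agr n x y \<longleftrightarrow> (\<forall>i<n. x i = y i)"

definition bclosed :: "(nat \<Rightarrow> nat) set \<Rightarrow> bool" where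
  "bclosed F \<longleftrightarrow> (\<forall>x. (\<forall>n. \<exists>y\<in>F. agr n x y) \<longrightarrow> x \<in> F)"

definition bcont :: "(nat \<Rightarrow> nat) set \<Rightarrow> ((nat \<Rightarrow> nat) \<Rightarrow> 'a::topological_space) \<Rightarrow> bool" where
  "bcont F f \<longleftrightarrow> (\<forall>x\<in>F. \<forall>U. open U \<longrightarrow> f x \<in> U \<longrightarrow> (\<exists>n. \<forall>y\<in>F. agr n x y \<longrightarrow> f y \<in> U))"

definition suslin :: "'a::topological_space set \<Rightarrow> bool" where
  "suslin A \<longleftrightarrow> (\<exists>F f. bclosed F \<and> bcont F f \<and> A = f ` F)"

lemma agr_mono: "agr n x y \<Longrightarrow> m \<le> n \<Longrightarrow> agr m x y"
  unfolding agr_def by auto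

lemma bcont_subset:
  assumes "bcont F f" "G \<subseteq> F" shows "bcont G f"
  unfolding bcont_def
proof (intro ballI allI impI)
  fix x U assume "x \<in> G" "open U" "f x \<in> U"
  then have "x \<in> F" using assms(2) by blast
  then obtain n where "\<forall>y\<in>F. agr n x y \<longrightarrow> f y \<in> U"
    using assms(1) \<open>open U\<close> \<open>f x \<in> U\<close> unfolding bcont_def by meson
  then show "\<exists>n. \<forall>y\<in>G. agr n x y \<longrightarrow> f y \<in> U" using assms(2) by blast
qed

lemma suslin_empty: "suslin {}"
  unfolding suslin_def bclosed_def bcont_def
  by (intro exI[of _ "{}"] exI[of _ "\<lambda>_. undefined"]) simp

lemma suslin_image:
  assumes "suslin A" "continuous_on UNIV g"
  shows "suslin (g ` A)"
proof -
  obtain F f where F: "bclosed F" "bcont F f" "A = f ` F" using assms unfolding suslin_def by blast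
  have "bcont F (g \<circ> f)"
    unfolding bcont_def
  proof (intro ballI allI impI)
    fix x U assume "x \<in> F" "open (U::'b set)" "(g \<circ> f) x \<in> U"
    then have "open (g -` U)" "f x \<in> g -` U" using assms(2) open_vimage by auto
    then obtain n where "\<forall>y\<in>F. agr n x y \<longrightarrow> f y \<in> g -` U"
      using F(2) \<open>x \<in> F\<close> unfolding bcont_def by blast
    then show "\<exists>n. \<forall>y\<in>F. agr n x y \<longrightarrow> (g \<circ> f) y \<in> U" by auto
  qed
  then show ?thesis unfolding suslin_def using F
    by (intro exI[of _ F] exI[of _ "g \<circ> f"]) (auto simp: image_comp)
qed

definition shiftn :: "(nat \<Rightarrow> nat) \<Rightarrow> (nat \<Rightarrow> nat)" where
  "shiftn x = (\<lambda>i. x (Suc i))"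

lemma agr_Suc: "agr (Suc n) x y \<Longrightarrow> x 0 = y 0 \<and> agr n (shiftn x) (shiftn y)"
  unfolding agr_def shiftn_def by auto

lemma suslin_UN:
  fixes A :: "nat \<Rightarrow> 'a::topological_space set"
  assumes "\<And>n. suslin (A n)"
  shows "suslin (\<Union>n. A n)"
proof -
  have "\<forall>n. \<exists>F f. bclosed F \<and> bcont F f \<and> A n = f ` F" using assms unfolding suslin_def by blast
  then obtain F f where F: "\<And>n. bclosed (F n)" "\<And>n. bcont (F n) (f n)" "\<And>n. A n = f n ` F n"
    by metis
  define G where "G = {x. shiftn x \<in> F (x 0)}"
  define g where "g = (\<lambda>x. f (x 0) (shiftn x))"
  have "bclosed G" unfolding bclosed_def
  proof (intro allI impI)
    fix x assume H: "\<forall>n. \<exists>y\<in>G. agr n x y"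
    have "\<forall>n. \<exists>y\<in>F (x 0). agr n (shiftn x) y"
    proof
      fix n
      obtain y where "y \<in> G" "agr (Suc n) x y" using H by blast
      then show "\<exists>y\<in>F (x 0). agr n (shiftn x) y" using agr_Suc[of n x y] unfolding G_def by auto
    qed
    then show "x \<in> G" using F(1) unfolding bclosed_def G_def by blast
  qed
  moreover have "bcont G g" unfolding bcont_def
  proof (intro ballI allI impI)
    fix x and U :: "'a set" assume "x \<in> G" "open U" "g x \<in> U"
    then obtain n where n: "\<forall>y\<in>F (x 0). agr n (shiftn x) y \<longrightarrow> f (x 0) y \<in> U"
      using F(2)[of "x 0"] unfolding bcont_def G_def g_def by blast
    show "\<exists>n. \<forall>y\<in>G. agr n x y \<longrightarrow> g y \<in> U"
    proof (intro exI[of _ "Suc n"] ballI impI)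
      fix y assume "y \<in> G" "agr (Suc n) x y"
      then show "g y \<in> U" using n agr_Suc[of n x y] unfolding G_def g_def by auto
    qed
  qed
  moreover have "(\<Union>n. A n) = g ` G"
  proof
    show "g ` G \<subseteq> (\<Union>n. A n)" unfolding G_def g_def using F(3) by auto
    show "(\<Union>n. A n) \<subseteq> g ` G"
    proof
      fix a assume "a \<in> (\<Union>n. A n)"
      then obtain n z where "z \<in> F n" "a = f n z" using F(3) by blast
      moreover have "shiftn (case_nat n z) = z" unfolding shiftn_def by simp
      ultimately show "a \<in> g ` G" unfolding G_def g_def
        by (intro image_eqI[of _ _ "case_nat n z"]) auto
    qed
  qed
  ultimately show ?thesis unfolding suslin_def by blast
qed

definition compn :: "nat \<Rightarrow> (nat \<Rightarrow> nat) \<Rightarrow> (nat \<Rightarrow> nat)" where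
  "compn n x = (\<lambda>i. x (prod_encode (n, i)))"

lemma prod_encode_mono2: "i < k \<Longrightarrow> prod_encode (n, i) < prod_encode (n, k)"
proof (induction k)
  case 0 then show ?case by simp
next
  case (Suc k)
  have "prod_encode (n, k) < prod_encode (n, Suc k)" by (simp add: prod_encode_def)
  then show ?case using Suc by (cases "i = k") auto
qed

lemma agr_compn: "agr K x y \<Longrightarrow> prod_encode (n, k) \<le> K \<Longrightarrow> agr k (compn n x) (compn n y)"
  unfolding agr_def compn_def using prod_encode_mono2
  by (meson order_less_le_trans)

lemma suslin_INT:
  fixes A :: "nat \<Rightarrow> 'a::t2_space set"
  assumes "\<And>n. suslin (A n)"
  shows "suslin (\<Inter>n. A n)"
proof -
  have "\<forall>n. \<exists>F f. bclosed F \<and> bcont F f \<and> A n = f ` F" using assms unfolding suslin_def by blast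
  then obtain F f where F: "\<And>n. bclosed (F n)" "\<And>n. bcont (F n) (f n)" "\<And>n. A n = f n ` F n"
    by metis
  define G where "G = {x. (\<forall>n. compn n x \<in> F n) \<and> (\<forall>n. f n (compn n x) = f 0 (compn 0 x))}"
  define g where "g = (\<lambda>x. f 0 (compn 0 x))"
  have "bclosed G" unfolding bclosed_def
  proof (intro allI impI)
    fix x assume H: "\<forall>n. \<exists>y\<in>G. agr n x y"
    have a: "compn n x \<in> F n" for n
    proof -
      have "\<forall>k. \<exists>z\<in>F n. agr k (compn n x) z"
      proof
        fix k
        obtain y where "y \<in> G" "agr (prod_encode (n, k)) x y" using H by blast
        then show "\<exists>z\<in>F n. agr k (compn n x) z"
          using agr_compn[of "prod_encode (n, k)" x y n k] unfolding G_def by auto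
      qed
      then show ?thesis using F(1) unfolding bclosed_def by blast
    qed
    have b: "f n (compn n x) = f 0 (compn 0 x)" for n
    proof (rule ccontr)
      assume "f n (compn n x) \<noteq> f 0 (compn 0 x)"
      then obtain U V where UV: "open U" "open V" "f n (compn n x) \<in> U" "f 0 (compn 0 x) \<in> V" "U \<inter> V = {}"
        using hausdorff by metis
      obtain k1 where k1: "\<forall>z\<in>F n. agr k1 (compn n x) z \<longrightarrow> f n z \<in> U"
        using F(2)[of n] a[of n] UV(1,3) unfolding bcont_def by metis
      obtain k2 where k2: "\<forall>z\<in>F 0. agr k2 (compn 0 x) z \<longrightarrow> f 0 z \<in> V"
        using F(2)[of 0] a[of 0] UV(2,4) unfolding bcont_def by metis
      obtain y where y: "y \<in> G" "agr (max (prod_encode (n, k1)) (prod_encode (0, k2))) x y" using H by blast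
      have yG: "compn n y \<in> F n" "compn 0 y \<in> F 0" "f n (compn n y) = f 0 (compn 0 y)"
        using y(1) unfolding G_def by auto
      have "agr k1 (compn n x) (compn n y)" by (rule agr_compn[OF y(2)]) simp
      then have "f n (compn n y) \<in> U" using k1 yG by blast
      moreover have "agr k2 (compn 0 x) (compn 0 y)" by (rule agr_compn[OF y(2)]) simp
      then have "f 0 (compn 0 y) \<in> V" using k2 yG by blast
      moreover note yG(3)
      ultimately show False using UV(5) by auto
    qed
    show "x \<in> G" unfolding G_def using a b by auto
  qed
  moreover have "bcont G g" unfolding bcont_def
  proof (intro ballI allI impI)
    fix x and U :: "'a set" assume "x \<in> G" "open U" "g x \<in> U"
    then obtain k where k: "\<forall>z\<in>F 0. agr k (compn 0 x) z \<longrightarrow> f 0 z \<in> U"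
      using F(2)[of 0] unfolding bcont_def G_def g_def by blast
    show "\<exists>n. \<forall>y\<in>G. agr n x y \<longrightarrow> g y \<in> U"
    proof (intro exI[of _ "prod_encode (0, k)"] ballI impI)
      fix y assume "y \<in> G" "agr (prod_encode (0, k)) x y"
      then have "agr k (compn 0 x) (compn 0 y)" "compn 0 y \<in> F 0"
        using agr_compn[of "prod_encode (0, k)" x y 0 k] unfolding G_def by auto
      then show "g y \<in> U" using k unfolding g_def by blast
    qed
  qed
  moreover have "(\<Inter>n. A n) = g ` G"
  proof
    show "g ` G \<subseteq> (\<Inter>n. A n)" unfolding G_def g_def using F(3) by auto (metis image_eqI)
    show "(\<Inter>n. A n) \<subseteq> g ` G"
    proof
      fix a assume "a \<in> (\<Inter>n. A n)"
      then have "\<forall>n. \<exists>z\<in>F n. a = f n z" using F(3) by blast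
      then obtain z where z: "\<And>n. z n \<in> F n" "\<And>n. a = f n (z n)" by metis
      define x where "x = (\<lambda>j. case prod_decode j of (n, i) \<Rightarrow> z n i)"
      have c: "compn n x = z n" for n unfolding compn_def x_def by auto
      show "a \<in> g ` G" unfolding G_def g_def
        by (rule image_eqI[of _ _ x]) (use c z in auto)
    qed
  qed
  ultimately show ?thesis unfolding suslin_def by blast
qed

lemma suslin_closed:
  fixes h :: "(nat \<Rightarrow> nat) \<Rightarrow> 'a::topological_space" and S :: "'a set"
  assumes "bcont UNIV h" "surj h" "closed S" shows "suslin S"
proof -
  have "bclosed (h -` S)" unfolding bclosed_def
  proof (intro allI impI)
    fix x assume H: "\<forall>n. \<exists>y\<in>h -` S. agr n x y"
    show "x \<in> h -` S"
    proof (rule ccontr)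
      assume "x \<notin> h -` S"
      then have "h x \<in> -S" "open (-S)" using assms(3) by auto
      then obtain n where n: "\<forall>y\<in>UNIV. agr n x y \<longrightarrow> h y \<in> -S"
        using assms(1) unfolding bcont_def by (meson UNIV_I)
      obtain y where "y \<in> h -` S" "agr n x y" using H by blast
      then show False using n by auto
    qed
  qed
  moreover have "bcont (h -` S) h" by (rule bcont_subset[OF assms(1)]) simp
  moreover have "S = h ` (h -` S)" using assms(2) by (simp add: surj_image_vimage_eq)
  ultimately show ?thesis unfolding suslin_def by (intro exI[of _ "h -` S"] exI[of _ h]) simp
qed

definition cylL :: "nat list \<Rightarrow> (nat \<Rightarrow> nat) set" where
  "cylL l = {y. \<forall>i<length l. y i = l ! i}"

lemma bclosed_cylL: "bclosed (cylL l)"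
  unfolding bclosed_def
proof (intro allI impI)
  fix x assume "\<forall>n. \<exists>y\<in>cylL l. agr n x y"
  then obtain y where "y \<in> cylL l" "agr (length l) x y" by blast
  then show "x \<in> cylL l" unfolding cylL_def agr_def by auto
qed

lemma cylL_map: "cylL (map x [0..<n]) = {y. agr n x y}"
  unfolding cylL_def agr_def by auto

lemma suslin_open:
  fixes h :: "(nat \<Rightarrow> nat) \<Rightarrow> 'a::topological_space" and S :: "'a set"
  assumes "bcont UNIV h" "surj h" "open S" shows "suslin S"
proof -
  define P where "P = h -` S"
  define T where "T l = (if cylL l \<subseteq> P then h ` cylL l else {})" for l
  have sT: "suslin (T l)" for l
  proof (cases "cylL l \<subseteq> P")
    case True
    have "bcont (cylL l) h" by (rule bcont_subset[OF assms(1)]) simp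
    then show ?thesis using True bclosed_cylL[of l] unfolding T_def suslin_def
      by (intro exI[of _ "cylL l"] exI[of _ h]) simp
  next
    case False then show ?thesis unfolding T_def by (simp add: suslin_empty)
  qed
  have "S = (\<Union>n. T (from_nat n))"
  proof
    show "(\<Union>n. T (from_nat n)) \<subseteq> S" unfolding T_def P_def by auto
    show "S \<subseteq> (\<Union>n. T (from_nat n))"
    proof
      fix a assume "a \<in> S"
      obtain x where x: "a = h x" using assms(2) by (metis surjD)
      then obtain n where n: "\<forall>y\<in>UNIV. agr n x y \<longrightarrow> h y \<in> S"
        using assms(1) assms(3) \<open>a \<in> S\<close> unfolding bcont_def by (meson UNIV_I)
      define l where "l = map x [0..<n]"
      have "cylL l \<subseteq> P" unfolding l_def cylL_map P_def using n by auto
      moreover have "x \<in> cylL l" unfolding l_def cylL_map agr_def by simp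
      ultimately have "a \<in> T l" unfolding T_def using x by simp
      then show "a \<in> (\<Union>n. T (from_nat n))" by (metis UN_iff UNIV_I from_nat_to_nat)
    qed
  qed
  then show ?thesis using sT suslin_UN by metis
qed

lemma borel_suslin:
  fixes h :: "(nat \<Rightarrow> nat) \<Rightarrow> 'a::t2_space" and S :: "'a set"
  assumes "bcont UNIV h" "surj h" "S \<in> sets borel"
  shows "suslin S \<and> suslin (- S)"
  using assms(3) unfolding sets_borel
proof (induction rule: sigma_sets.induct)
  case (Basic a)
  then show ?case using suslin_open[OF assms(1,2)] suslin_closed[OF assms(1,2)] closed_Compl by auto
next
  case Empty
  then show ?case using suslin_empty suslin_closed[OF assms(1,2)] by auto
next
  case (Compl a)
  then show ?case by (simp add: Compl_eq_Diff_UNIV[symmetric])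
next
  case (Union A)
  have h1: "\<And>i. suslin (A i)" and h2: "\<And>i. suslin (- A i)" using Union.IH by auto
  have "suslin (\<Union>i. A i)" by (rule suslin_UN[OF h1])
  moreover have "suslin (\<Inter>i. - A i)" by (rule suslin_INT[OF h2])
  ultimately show ?case by simp
qed

definition sep :: "'a::topological_space set \<Rightarrow> 'a set \<Rightarrow> bool" where
  "sep A B \<longleftrightarrow> (\<exists>S\<in>sets borel. A \<subseteq> S \<and> S \<inter> B = {})"

lemma sep_mono: "sep A B \<Longrightarrow> A' \<subseteq> A \<Longrightarrow> B' \<subseteq> B \<Longrightarrow> sep A' B'"
  unfolding sep_def by blast

lemma sep_UN:
  fixes A B :: "nat \<Rightarrow> 'a::topological_space set"
  assumes "\<And>n m. sep (A n) (B m)"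
  shows "sep (\<Union>n. A n) (\<Union>m. B m)"
proof -
  obtain S where S: "\<And>n m. S n m \<in> sets borel" "\<And>n m. A n \<subseteq> S n m" "\<And>n m. S n m \<inter> B m = {}"
    using assms unfolding sep_def by metis
  define T where "T = (\<Union>n. \<Inter>m. S n m)"
  have "T \<in> sets borel" unfolding T_def using S(1)
    by (intro sets.countable_UN[of _ UNIV] image_subsetI sets.countable_INT[of _ UNIV]) auto
  moreover have "(\<Union>n. A n) \<subseteq> T" unfolding T_def using S(2) by blast
  moreover have "T \<inter> (\<Union>m. B m) = {}" unfolding T_def using S(3) by blast
  ultimately show ?thesis unfolding sep_def by blast
qed

lemma cyl_split: "F \<inter> {y. agr n u y} = (\<Union>i. F \<inter> {y. agr (Suc n) (u(n := i)) y})"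
proof
  show "F \<inter> {y. agr n u y} \<subseteq> (\<Union>i. F \<inter> {y. agr (Suc n) (u(n := i)) y})"
  proof
    fix y assume "y \<in> F \<inter> {y. agr n u y}"
    then have "y \<in> F \<inter> {y. agr (Suc n) (u(n := y n)) y}" unfolding agr_def
      by (auto simp: less_Suc_eq)
    then show "y \<in> (\<Union>i. F \<inter> {y. agr (Suc n) (u(n := i)) y})" by blast
  qed
  show "(\<Union>i. F \<inter> {y. agr (Suc n) (u(n := i)) y}) \<subseteq> F \<inter> {y. agr n u y}"
    unfolding agr_def by auto
qed

lemma lusin_sep:
  fixes f g :: "(nat \<Rightarrow> nat) \<Rightarrow> 'a::t2_space" and S :: "'a set"
  assumes F: "bclosed F" "bcont F f" and G: "bclosed G" "bcont G g"
    and disj: "f ` F \<inter> g ` G = {}"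
  shows "sep (f ` F) (g ` G)"
proof (rule ccontr)
  define P where "P u v n \<longleftrightarrow> \<not> sep (f ` (F \<inter> {y. agr n u y})) (g ` (G \<inter> {y. agr n v y}))" for u v n
  assume "\<not> sep (f ` F) (g ` G)"
  then have P0: "P u v 0" for u v unfolding P_def agr_def by simp
  have step: "\<exists>i j. P (u(n := i)) (v(n := j)) (Suc n)" if "P u v n" for u v n
  proof (rule ccontr)
    assume "\<nexists>i j. P (u(n := i)) (v(n := j)) (Suc n)"
    then have "sep (\<Union>i. f ` (F \<inter> {y. agr (Suc n) (u(n := i)) y})) (\<Union>j. g ` (G \<inter> {y. agr (Suc n) (v(n := j)) y}))"
      unfolding P_def by (intro sep_UN) blast
    moreover have "f ` (F \<inter> {y. agr n u y}) = (\<Union>i. f ` (F \<inter> {y. agr (Suc n) (u(n := i)) y}))"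
      by (subst cyl_split) (rule image_UN)
    moreover have "g ` (G \<inter> {y. agr n v y}) = (\<Union>i. g ` (G \<inter> {y. agr (Suc n) (v(n := i)) y}))"
      by (subst cyl_split) (rule image_UN)
    ultimately have "sep (f ` (F \<inter> {y. agr n u y})) (g ` (G \<inter> {y. agr n v y}))"
      by simp
    then show False using that unfolding P_def by blast
  qed
  define q where "q = rec_nat ((\<lambda>_. 0::nat), (\<lambda>_. 0::nat))
     (\<lambda>n p. SOME p'. \<exists>i j. p' = ((fst p)(n := i), (snd p)(n := j)) \<and> P (fst p') (snd p') (Suc n))"
  have q0: "q 0 = ((\<lambda>_. 0), (\<lambda>_. 0))" unfolding q_def by simp
  have qS: "q (Suc n) = (SOME p'. \<exists>i j. p' = ((fst (q n))(n := i), (snd (q n))(n := j)) \<and> P (fst p') (snd p') (Suc n))" for n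
    unfolding q_def by simp
  have inv: "P (fst (q n)) (snd (q n)) n \<and> (\<exists>i j. q (Suc n) = ((fst (q n))(n := i), (snd (q n))(n := j)) \<and> P (fst (q (Suc n))) (snd (q (Suc n))) (Suc n))" for n
  proof (induction n)
    case 0
    have "P (fst (q 0)) (snd (q 0)) 0" using P0 by blast
    moreover from step[OF this] have "\<exists>p'. \<exists>i j. p' = ((fst (q 0))(0 := i), (snd (q 0))(0 := j)) \<and> P (fst p') (snd p') (Suc 0)"
      by auto
    from someI_ex[OF this] have "\<exists>i j. q (Suc 0) = ((fst (q 0))(0 := i), (snd (q 0))(0 := j)) \<and> P (fst (q (Suc 0))) (snd (q (Suc 0))) (Suc 0)"
      unfolding qS[of 0] by blast
    ultimately show ?case by blast
  next
    case (Suc n)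
    then have "P (fst (q (Suc n))) (snd (q (Suc n))) (Suc n)" by blast
    moreover from step[OF this] have "\<exists>p'. \<exists>i j. p' = ((fst (q (Suc n)))(Suc n := i), (snd (q (Suc n)))(Suc n := j)) \<and> P (fst p') (snd p') (Suc (Suc n))"
      by auto
    from someI_ex[OF this] have "\<exists>i j. q (Suc (Suc n)) = ((fst (q (Suc n)))(Suc n := i), (snd (q (Suc n)))(Suc n := j)) \<and> P (fst (q (Suc (Suc n)))) (snd (q (Suc (Suc n)))) (Suc (Suc n))"
      unfolding qS[of "Suc n"] by blast
    ultimately show ?case by blast
  qed
  define x where "x i = fst (q (Suc i)) i" for i
  define w where "w i = snd (q (Suc i)) i" for i
  have agx: "agr m (fst (q m)) x \<and> agr m (snd (q m)) w" for m
  proof (induction m)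
    case 0 then show ?case unfolding agr_def by simp
  next
    case (Suc m)
    obtain i j where ij: "q (Suc m) = ((fst (q m))(m := i), (snd (q m))(m := j))" using inv[of m] by blast
    show ?case
      unfolding agr_def
    proof (intro conjI allI impI)
      fix k assume "k < Suc m"
      then consider "k < m" | "k = m" by linarith
      then show "fst (q (Suc m)) k = x k"
        by cases (use Suc ij in \<open>auto simp: agr_def x_def\<close>)
      from \<open>k < Suc m\<close> consider "k < m" | "k = m" by linarith
      then show "snd (q (Suc m)) k = w k"
        by cases (use Suc ij in \<open>auto simp: agr_def w_def\<close>)
    qed
  qed
  have agr_trans: "agr n a b \<Longrightarrow> agr n a c \<longleftrightarrow> agr n b c" for n a b c
    unfolding agr_def by auto
  have Pxw: "P x w n" for n
  proof -
    have "{y. agr n (fst (q n)) y} = {y. agr n x y}" "{y. agr n (snd (q n)) y} = {y. agr n w y}"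
      using agx[of n] unfolding agr_def by auto
    then show ?thesis using inv[of n] unfolding P_def by simp
  qed
  have nonempty: "(\<exists>z\<in>F. agr n x z) \<and> (\<exists>z\<in>G. agr n w z)" for n
  proof (rule ccontr)
    assume "\<not> ((\<exists>z\<in>F. agr n x z) \<and> (\<exists>z\<in>G. agr n w z))"
    then have "F \<inter> {y. agr n x y} = {} \<or> G \<inter> {y. agr n w y} = {}" by blast
    then have "sep (f ` (F \<inter> {y. agr n x y})) (g ` (G \<inter> {y. agr n w y}))"
    proof
      assume a: "F \<inter> {y. agr n x y} = {}"
      show ?thesis unfolding sep_def by (rule bexI[of _ "{}"]) (use a in auto)
    next
      assume a: "G \<inter> {y. agr n w y} = {}"
      show ?thesis unfolding sep_def by (rule bexI[of _ "UNIV"]) (use a in auto)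
    qed
    then show False using Pxw[of n] unfolding P_def by blast
  qed
  have "\<forall>n. \<exists>z\<in>F. agr n x z" "\<forall>n. \<exists>z\<in>G. agr n w z" using nonempty by auto
  then have "x \<in> F" "w \<in> G" using F(1) G(1) unfolding bclosed_def by auto
  have "f x \<noteq> g w" using disj \<open>x \<in> F\<close> \<open>w \<in> G\<close> by blast
  then obtain U V where UV: "open U" "open V" "f x \<in> U" "g w \<in> V" "U \<inter> V = {}"
    using hausdorff by metis
  obtain k1 where k1: "\<forall>z\<in>F. agr k1 x z \<longrightarrow> f z \<in> U"
    using F(2) \<open>x \<in> F\<close> UV(1,3) unfolding bcont_def by metis
  obtain k2 where k2: "\<forall>z\<in>G. agr k2 w z \<longrightarrow> g z \<in> V"
    using G(2) \<open>w \<in> G\<close> UV(2,4) unfolding bcont_def by metis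
  define n where "n = max k1 k2"
  have "f ` (F \<inter> {y. agr n x y}) \<subseteq> U" using k1 agr_mono[of n x _ k1] unfolding n_def by auto
  moreover have "g ` (G \<inter> {y. agr n w y}) \<subseteq> V" using k2 agr_mono[of n w _ k2] unfolding n_def by auto
  ultimately have "sep (f ` (F \<inter> {y. agr n x y})) (g ` (G \<inter> {y. agr n w y}))"
    unfolding sep_def using UV(5) by (intro bexI[of _ U] conjI) (auto simp: borel_open[OF UV(1)])
  then show False using Pxw[of n] unfolding P_def by blast
qed

lemma suslin_sep:
  fixes A B :: "'a::t2_space set"
  assumes "suslin A" "suslin B" "A \<inter> B = {}" shows "sep A B"
proof -
  obtain F f where "bclosed F" "bcont F f" "A = f ` F" using assms(1) unfolding suslin_def by blast
  moreover obtain G g where "bclosed G" "bcont G g" "B = g ` G" using assms(2) unfolding suslin_def by blast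
  ultimately show ?thesis using lusin_sep[of F f G g] assms(3) by simp
qed

definition dig :: "(nat \<Rightarrow> nat) \<Rightarrow> nat \<Rightarrow> real" where
  "dig x k = real (min 1 (x (Suc k))) / 2 ^ Suc k"

definition bmap :: "(nat \<Rightarrow> nat) \<Rightarrow> real" where
  "bmap x = real_of_int (int_decode (x 0)) + (\<Sum>k. dig x k)"

lemma geo_summable: "summable (\<lambda>k. (1/2::real) ^ Suc k)"
proof -
  have "summable (\<lambda>k. (1/2::real) * (1/2) ^ k)" by (intro summable_mult) simp
  then show ?thesis by simp
qed

lemma dig_bound: "0 \<le> dig x k \<and> dig x k \<le> (1/2) ^ Suc k"
proof -
  have "real (min 1 (x (Suc k))) \<le> 1" by simp
  then have "dig x k \<le> 1 / 2 ^ Suc k" unfolding dig_def by (rule divide_right_mono) simp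
  moreover have "0 \<le> dig x k" unfolding dig_def by simp
  ultimately show ?thesis by (simp add: power_one_over)
qed

lemma summable_dig: "summable (dig x)"
  by (rule summable_comparison_test'[OF geo_summable, of 0]) (use dig_bound in auto)

lemma geo_tail: "(\<Sum>k. (1/2::real) ^ Suc (k + n)) = (1/2) ^ n"
proof -
  have "(\<Sum>k. (1/2::real) ^ Suc (k + n)) = (\<Sum>k. (1/2) ^ Suc n * (1/2) ^ k)"
    by (simp add: power_add mult.commute)
  also have "\<dots> = (1/2) ^ Suc n * (\<Sum>k. (1/2::real) ^ k)"
    by (rule suminf_mult) simp
  also have "\<dots> = (1/2) ^ n" by (simp add: suminf_geometric)
  finally show ?thesis .
qed

lemma bmap_close:
  assumes "agr (Suc n) x y" shows "\<bar>bmap x - bmap y\<bar> \<le> (1/2) ^ n"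
proof -
  have x0: "x 0 = y 0" using assms unfolding agr_def by auto
  define c where "c k = dig x k - dig y k" for k
  have sc: "summable c" unfolding c_def using summable_dig by (intro summable_diff)
  have c0: "c k = 0" if "k < n" for k
    using assms that unfolding c_def dig_def agr_def by auto
  have cb: "\<bar>c k\<bar> \<le> (1/2) ^ Suc k" for k
    using dig_bound[of x k] dig_bound[of y k] unfolding c_def by linarith
  have "bmap x - bmap y = (\<Sum>k. dig x k) - (\<Sum>k. dig y k)" unfolding bmap_def x0 by simp
  also have "\<dots> = suminf c" unfolding c_def by (rule suminf_diff) (rule summable_dig)+
  also have "\<dots> = (\<Sum>k. c (k + n)) + (\<Sum>i<n. c i)" by (rule suminf_split_initial_segment[OF sc])
  also have "(\<Sum>i<n. c i) = 0" using c0 by simp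
  finally have eq: "bmap x - bmap y = (\<Sum>k. c (k + n))" by simp
  have sa: "summable (\<lambda>k. \<bar>c (k + n)\<bar>)"
    by (rule summable_comparison_test'[of "\<lambda>k. (1/2::real) ^ Suc (k + n)" 0])
       (use cb summable_ignore_initial_segment[OF geo_summable, of n] in auto)
  have "\<bar>\<Sum>k. c (k + n)\<bar> \<le> (\<Sum>k. \<bar>c (k + n)\<bar>)" by (rule summable_rabs[OF sa])
  also have "\<dots> \<le> (\<Sum>k. (1/2::real) ^ Suc (k + n))"
    by (rule suminf_le) (use cb sa summable_ignore_initial_segment[OF geo_summable, of n] in auto)
  also have "\<dots> = (1/2) ^ n" by (rule geo_tail)
  finally show ?thesis using eq by simp
qed

lemma bmap_cont: "bcont UNIV bmap"
  unfolding bcont_def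
proof (intro ballI allI impI)
  fix x and U :: "real set" assume "open U" "bmap x \<in> U"
  then obtain e where e: "e > 0" "\<forall>y. dist y (bmap x) < e \<longrightarrow> y \<in> U"
    unfolding open_dist by blast
  obtain n where n: "(1/2::real) ^ n < e" using real_arch_pow_inv[OF e(1), of "1/2"] by auto
  show "\<exists>n. \<forall>y\<in>UNIV. agr n x y \<longrightarrow> bmap y \<in> U"
  proof (intro exI[of _ "Suc n"] ballI impI)
    fix y assume "agr (Suc n) x y"
    then have "\<bar>bmap x - bmap y\<bar> \<le> (1/2) ^ n" by (rule bmap_close)
    then have "dist (bmap y) (bmap x) < e" using n by (simp add: dist_real_def abs_minus_commute)
    then show "bmap y \<in> U" using e by blast
  qed
qed

lemma floor_double_div: "\<lfloor>2 * y\<rfloor> div 2 = \<lfloor>y::real\<rfloor>"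
proof -
  have "\<lfloor>(2 * y) / real_of_int 2\<rfloor> = \<lfloor>2 * y\<rfloor> div 2" by (rule floor_divide_real_eq_div) simp
  then show ?thesis by simp
qed

lemma bmap_surj: "surj bmap"
proof (rule surjI)
  fix r :: real
  define x where "x k = (if k = 0 then int_encode \<lfloor>r\<rfloor> else nat (\<lfloor>2 ^ k * r\<rfloor> mod 2))" for k
  have dx: "dig x k = real_of_int (\<lfloor>2 ^ Suc k * r\<rfloor> mod 2) / 2 ^ Suc k" for k
  proof -
    have "\<lfloor>2 ^ Suc k * r\<rfloor> mod 2 = 0 \<or> \<lfloor>2 ^ Suc k * r\<rfloor> mod 2 = 1" by presburger
    then show ?thesis unfolding dig_def x_def by auto
  qed
  have ps: "(\<Sum>k<n. dig x k) = real_of_int \<lfloor>2 ^ n * r\<rfloor> / 2 ^ n - \<lfloor>r\<rfloor>" for n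
  proof (induction n)
    case 0 then show ?case by simp
  next
    case (Suc n)
    have key: "\<lfloor>2 ^ Suc n * r\<rfloor> = 2 * \<lfloor>2 ^ n * r\<rfloor> + \<lfloor>2 ^ Suc n * r\<rfloor> mod 2"
    proof -
      have "\<lfloor>2 ^ Suc n * r\<rfloor> div 2 = \<lfloor>2 ^ n * r\<rfloor>"
        using floor_double_div[of "2 ^ n * r"] by (simp add: mult.assoc)
      then show ?thesis by (metis div_mult_mod_eq mult.commute)
    qed
    have "(\<Sum>k<Suc n. dig x k) = real_of_int \<lfloor>2 ^ n * r\<rfloor> / 2 ^ n - \<lfloor>r\<rfloor> + real_of_int (\<lfloor>2 ^ Suc n * r\<rfloor> mod 2) / 2 ^ Suc n"
      using Suc dx by simp
    also have "\<dots> = real_of_int (2 * \<lfloor>2 ^ n * r\<rfloor> + \<lfloor>2 ^ Suc n * r\<rfloor> mod 2) / 2 ^ Suc n - \<lfloor>r\<rfloor>"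
      by (simp add: field_simps)
    also have "\<dots> = real_of_int \<lfloor>2 ^ Suc n * r\<rfloor> / 2 ^ Suc n - \<lfloor>r\<rfloor>"
      using key by simp
    finally show ?case .
  qed
  have lim: "(\<lambda>n. real_of_int \<lfloor>2 ^ n * r\<rfloor> / 2 ^ n) \<longlonglongrightarrow> r"
  proof -
    have "(\<lambda>n. r - frac (2 ^ n * r) / 2 ^ n) \<longlonglongrightarrow> r - 0"
    proof (intro tendsto_diff tendsto_const)
      have h: "(\<lambda>n. (1/2::real) ^ n) \<longlonglongrightarrow> 0" by (rule LIMSEQ_realpow_zero) auto
      have up: "frac (2 ^ n * r) / 2 ^ n \<le> (1/2) ^ n" for n
      proof -
        have "frac (2 ^ n * r) \<le> 1" using frac_lt_1[of "2 ^ n * r"] by linarith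
        then have "frac (2 ^ n * r) / 2 ^ n \<le> 1 / 2 ^ n" by (rule divide_right_mono) simp
        then show ?thesis by (simp add: power_one_over)
      qed
      have lo: "0 \<le> frac (2 ^ n * r) / 2 ^ n" for n by simp
      show "(\<lambda>n. frac (2 ^ n * r) / 2 ^ n) \<longlonglongrightarrow> 0"
        by (rule tendsto_sandwich[OF always_eventually always_eventually tendsto_const h])
           (use up lo in auto)
    qed
    moreover have "r - frac (2 ^ n * r) / 2 ^ n = real_of_int \<lfloor>2 ^ n * r\<rfloor> / 2 ^ n" for n
      by (simp add: frac_def diff_divide_distrib)
    ultimately show ?thesis by simp
  qed
  have "dig x sums (r - \<lfloor>r\<rfloor>)"
    unfolding sums_def ps by (intro tendsto_diff lim tendsto_const)
  then have "(\<Sum>k. dig x k) = r - \<lfloor>r\<rfloor>" by (rule sums_unique[symmetric])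
  then show "bmap x = r" unfolding bmap_def x_def by simp
qed

lemma bcontD: "bcont F f \<Longrightarrow> x \<in> F \<Longrightarrow> open U \<Longrightarrow> f x \<in> U \<Longrightarrow> \<exists>n. \<forall>y\<in>F. agr n x y \<longrightarrow> f y \<in> U"
  unfolding bcont_def by blast

definition bmap2 :: "(nat \<Rightarrow> nat) \<Rightarrow> real \<times> real" where
  "bmap2 x = (bmap (\<lambda>i. x (2 * i)), bmap (\<lambda>i. x (2 * i + 1)))"

lemma bmap2_cont: "bcont UNIV bmap2"
  unfolding bcont_def
proof (intro ballI allI impI)
  fix x and U :: "(real \<times> real) set" assume "open U" "bmap2 x \<in> U"
  then obtain A B where AB: "open A" "open B" "bmap2 x \<in> A \<times> B" "A \<times> B \<subseteq> U"
    by (rule open_prod_elim)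
  obtain n1 where n1: "\<forall>y\<in>UNIV. agr n1 (\<lambda>i. x (2 * i)) y \<longrightarrow> bmap y \<in> A"
    using bcontD[OF bmap_cont UNIV_I AB(1)] AB(3) unfolding bmap2_def by auto
  obtain n2 where n2: "\<forall>y\<in>UNIV. agr n2 (\<lambda>i. x (2 * i + 1)) y \<longrightarrow> bmap y \<in> B"
    using bcontD[OF bmap_cont UNIV_I AB(2)] AB(3) unfolding bmap2_def by auto
  show "\<exists>n. \<forall>y\<in>UNIV. agr n x y \<longrightarrow> bmap2 y \<in> U"
  proof (intro exI[of _ "2 * (n1 + n2) + 2"] ballI impI)
    fix y assume a: "agr (2 * (n1 + n2) + 2) x y"
    have "agr n1 (\<lambda>i. x (2 * i)) (\<lambda>i. y (2 * i))" unfolding agr_def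
    proof (intro allI impI)
      fix i assume "i < n1" then have "2 * i < 2 * (n1 + n2) + 2" by simp
      then show "x (2 * i) = y (2 * i)" using a unfolding agr_def by simp
    qed
    moreover have "agr n2 (\<lambda>i. x (2 * i + 1)) (\<lambda>i. y (2 * i + 1))" unfolding agr_def
    proof (intro allI impI)
      fix i assume "i < n2" then have "2 * i + 1 < 2 * (n1 + n2) + 2" by simp
      then show "x (2 * i + 1) = y (2 * i + 1)" using a unfolding agr_def by simp
    qed
    ultimately have "bmap2 y \<in> A \<times> B" using n1 n2 unfolding bmap2_def by simp
    then show "bmap2 y \<in> U" by (rule subsetD[OF AB(4)])
  qed
qed

lemma bmap2_surj: "surj bmap2"
  unfolding surj_def
proof
  fix p :: "real \<times> real"
  obtain u v where uv: "bmap u = fst p" "bmap v = snd p" using bmap_surj by (metis surjD)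
  define x where "x j = (if even j then u (j div 2) else v (j div 2))" for j
  have "(\<lambda>i. x (2 * i)) = u" "(\<lambda>i. x (2 * i + 1)) = v" unfolding x_def by (rule ext, simp)+
  then have "bmap2 x = p" unfolding bmap2_def using uv by simp
  then show "\<exists>x. p = bmap2 x" by metis
qed

definition satE :: "(real \<times> real) set \<Rightarrow> real set \<Rightarrow> real set" where
  "satE E S = {a. \<exists>b\<in>S. (a, b) \<in> E}"

lemma satE_suslin:
  assumes "E \<in> sets (borel :: (real \<times> real) measure)" "S \<in> sets (borel :: real measure)"
  shows "suslin (satE E S)"
proof -
  have "snd \<in> borel_measurable (borel :: (real \<times> real) measure)"
    by (rule borel_measurable_continuous_onI) (intro continuous_on_snd continuous_on_id)
  then have "snd -` S \<inter> space (borel :: (real \<times> real) measure) \<in> sets borel"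
    using assms(2) by (rule measurable_sets)
  moreover have "snd -` S \<inter> space (borel :: (real \<times> real) measure) = UNIV \<times> S" by auto
  ultimately have "(UNIV \<times> S :: (real \<times> real) set) \<in> sets borel" by simp
  then have "E \<inter> (UNIV \<times> S) \<in> sets borel" using assms(1) by (rule sets.Int[rotated])
  then have "suslin (E \<inter> (UNIV \<times> S))" using borel_suslin[OF bmap2_cont bmap2_surj] by blast
  then have "suslin (fst ` (E \<inter> (UNIV \<times> S)))"
    by (rule suslin_image) (intro continuous_on_fst continuous_on_id)
  moreover have "fst ` (E \<inter> (UNIV \<times> S)) = satE E S" unfolding satE_def by force
  ultimately show ?thesis by simp
qed

lemma invariant_sep:
  assumes E: "E \<in> sets (borel :: (real \<times> real) measure)" "equiv UNIV E"
    and C: "C \<in> sets (borel :: real measure)" and D: "D \<in> sets (borel :: real measure)"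
    and noE: "\<And>c d. c \<in> C \<Longrightarrow> d \<in> D \<Longrightarrow> (c, d) \<notin> E"
  shows "\<exists>A\<in>saturated_borel E. C \<subseteq> A \<and> A \<inter> D = {}"
proof -
  have refl: "(a, a) \<in> E" for a using E(2) unfolding equiv_def refl_on_def by blast
  have sym: "(a, b) \<in> E \<Longrightarrow> (b, a) \<in> E" for a b using E(2) unfolding equiv_def sym_def by blast
  have trans: "(a, b) \<in> E \<Longrightarrow> (b, c) \<in> E \<Longrightarrow> (a, c) \<in> E" for a b c
    using E(2) unfolding equiv_def trans_def by blast
  define good where "good S \<longleftrightarrow> S \<in> sets (borel :: real measure) \<and> S \<inter> satE E D = {}" for S
  have sD: "suslin (satE E D)" by (rule satE_suslin[OF E(1) D])
  have ext: "\<exists>S. good S \<and> satE E X \<subseteq> S" if "X \<in> sets borel" "satE E X \<inter> satE E D = {}" for X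
  proof -
    have "sep (satE E X) (satE E D)" by (rule suslin_sep[OF satE_suslin[OF E(1) that(1)] sD that(2)])
    then show ?thesis unfolding sep_def good_def by blast
  qed
  have disj: "satE E X \<inter> satE E D = {}" if "X \<inter> satE E D = {}" for X
  proof (rule ccontr)
    assume "satE E X \<inter> satE E D \<noteq> {}"
    then obtain a b d where "b \<in> X" "(a, b) \<in> E" "d \<in> D" "(a, d) \<in> E" unfolding satE_def by blast
    then have "(b, d) \<in> E" using sym trans by blast
    then have "b \<in> satE E D" using \<open>d \<in> D\<close> unfolding satE_def by blast
    then show False using that \<open>b \<in> X\<close> by blast
  qed
  have disjC: "satE E C \<inter> satE E D = {}"
  proof (rule ccontr)
    assume "satE E C \<inter> satE E D \<noteq> {}"
    then obtain a b d where "b \<in> C" "(a, b) \<in> E" "d \<in> D" "(a, d) \<in> E" unfolding satE_def by blast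
    then have "(b, d) \<in> E" using sym trans by blast
    then show False using noE \<open>b \<in> C\<close> \<open>d \<in> D\<close> by blast
  qed
  define B where "B = rec_nat (SOME S. good S \<and> satE E C \<subseteq> S) (\<lambda>n X. SOME S. good S \<and> satE E X \<subseteq> S)"
  have B0: "good (B 0) \<and> satE E C \<subseteq> B 0"
  proof -
    have "B 0 = (SOME S. good S \<and> satE E C \<subseteq> S)" unfolding B_def by simp
    then show ?thesis using someI_ex[OF ext[OF C disjC]] by simp
  qed
  have BS: "good (B n)" for n
  proof (induction n)
    case 0 then show ?case using B0 by blast
  next
    case (Suc n)
    have "B (Suc n) = (SOME S. good S \<and> satE E (B n) \<subseteq> S)" unfolding B_def by simp
    moreover have "B n \<in> sets borel" "B n \<inter> satE E D = {}" using Suc unfolding good_def by auto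
    ultimately show ?case using someI_ex[OF ext[OF \<open>B n \<in> sets borel\<close> disj[OF \<open>B n \<inter> satE E D = {}\<close>]]]
      by simp
  qed
  have BS2: "satE E (B n) \<subseteq> B (Suc n)" for n
  proof -
    have "B (Suc n) = (SOME S. good S \<and> satE E (B n) \<subseteq> S)" unfolding B_def by simp
    moreover have "B n \<in> sets borel" "B n \<inter> satE E D = {}" using BS[of n] unfolding good_def by auto
    ultimately show ?thesis using someI_ex[OF ext[OF \<open>B n \<in> sets borel\<close> disj[OF \<open>B n \<inter> satE E D = {}\<close>]]]
      by simp
  qed
  define A where "A = (\<Union>n. B n)"
  have "A \<in> sets borel" unfolding A_def using BS unfolding good_def
    by (intro sets.countable_UN[of _ UNIV] image_subsetI) auto
  moreover have satA: "\<forall>(x, y)\<in>E. (x \<in> A \<longleftrightarrow> y \<in> A)"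
  proof (intro ballI)
    fix p assume "p \<in> E"
    obtain x y where p: "p = (x, y)" by fastforce
    have "x \<in> A \<Longrightarrow> y \<in> A"
    proof -
      assume "x \<in> A" then obtain n where "x \<in> B n" unfolding A_def by blast
      then have "y \<in> satE E (B n)" using sym \<open>p \<in> E\<close> p unfolding satE_def by blast
      then show "y \<in> A" using BS2 unfolding A_def by blast
    qed
    moreover have "y \<in> A \<Longrightarrow> x \<in> A"
    proof -
      assume "y \<in> A" then obtain n where "y \<in> B n" unfolding A_def by blast
      then have "x \<in> satE E (B n)" using \<open>p \<in> E\<close> p unfolding satE_def by blast
      then show "x \<in> A" using BS2 unfolding A_def by blast
    qed
    ultimately show "case p of (x, y) \<Rightarrow> (x \<in> A \<longleftrightarrow> y \<in> A)" using p by auto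
  qed
  moreover have "C \<subseteq> A"
  proof
    fix c assume "c \<in> C"
    then have "c \<in> satE E C" using refl unfolding satE_def by blast
    then show "c \<in> A" using B0 unfolding A_def by blast
  qed
  moreover have "A \<inter> D = {}"
  proof -
    have "D \<subseteq> satE E D" using refl unfolding satE_def by blast
    then show ?thesis using BS unfolding A_def good_def by blast
  qed
  ultimately show ?thesis unfolding saturated_borel_def by blast
qed

lemma meas_facts:
  assumes "prob_space \<mu>" "sets \<mu> = sets (borel :: real measure)"
  shows "\<And>X. 0 \<le> measure \<mu> X" "\<And>X. measure \<mu> X \<le> 1"
    "\<And>X. X \<in> sets borel \<Longrightarrow> measure \<mu> (- X) = 1 - measure \<mu> X"
    "\<And>X Y. X \<subseteq> Y \<Longrightarrow> Y \<in> sets borel \<Longrightarrow> measure \<mu> X \<le> measure \<mu> Y"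
proof -
  have sp: "space \<mu> = UNIV" using sets_eq_imp_space_eq[OF assms(2)] by simp
  show "\<And>X. 0 \<le> measure \<mu> X" by simp
  show "\<And>X. measure \<mu> X \<le> 1" using prob_space.prob_le_1[OF assms(1)] by blast
  show "\<And>X. X \<in> sets borel \<Longrightarrow> measure \<mu> (- X) = 1 - measure \<mu> X"
  proof -
    fix X :: "real set" assume "X \<in> sets borel"
    then have "X \<in> sets \<mu>" using assms(2) by simp
    then have "measure \<mu> (space \<mu> - X) = 1 - measure \<mu> X" by (rule prob_space.prob_compl[OF assms(1)])
    then show "measure \<mu> (- X) = 1 - measure \<mu> X" using sp by (simp add: Compl_eq_Diff_UNIV)
  qed
  show "\<And>X Y. X \<subseteq> Y \<Longrightarrow> Y \<in> sets borel \<Longrightarrow> measure \<mu> X \<le> measure \<mu> Y"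
  proof -
    fix X Y :: "real set" assume "X \<subseteq> Y" "Y \<in> sets borel"
    then show "measure \<mu> X \<le> measure \<mu> Y"
      using finite_measure.finite_measure_mono[OF prob_space.finite_measure[OF assms(1)]] assms(2) by simp
  qed
qed

theorem lemma8p10:
  fixes E :: "(real \<times> real) set" and \<mu>1 \<mu>2 :: "real measure"
  assumes "E \<in> sets (borel :: (real \<times> real) measure)"
    and "equiv UNIV E"
    and "prob_space \<mu>1" and "sets \<mu>1 = sets borel"
    and "prob_space \<mu>2" and "sets \<mu>2 = sets borel"
  shows "cover_inf \<mu>1 \<mu>2 E = 1 - (SUP A \<in> saturated_borel E. \<bar>measure \<mu>1 A - measure \<mu>2 A\<bar>)"
proof -
  note m1 = meas_facts[OF assms(3,4)]
  note m2 = meas_facts[OF assms(5,6)]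
  define M where "M = {measure \<mu>1 B1 + measure \<mu>2 B2 | B1 B2.
      B1 \<in> sets (borel :: real measure) \<and> B2 \<in> sets (borel :: real measure) \<and>
      E \<subseteq> (B1 \<times> UNIV) \<union> (UNIV \<times> B2)}"
  define \<Phi> where "\<Phi> = (SUP A \<in> saturated_borel E. \<bar>measure \<mu>1 A - measure \<mu>2 A\<bar>)"
  have ci: "cover_inf \<mu>1 \<mu>2 E = Inf M" unfolding cover_inf_def M_def by simp
  have "measure \<mu>1 UNIV + measure \<mu>2 UNIV \<in> M"
    unfolding M_def by (rule CollectI, rule exI[of _ UNIV], rule exI[of _ UNIV]) simp
  then have Mne: "M \<noteq> {}" by blast
  have Mbdd: "bdd_below M" unfolding M_def bdd_below_def
    by (rule exI[of _ 0]) (auto intro: add_nonneg_nonneg m1(1) m2(1))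
  have "{} \<in> saturated_borel E" unfolding saturated_borel_def by simp
  then have Sne: "saturated_borel E \<noteq> {}" by blast
  have Sbdd: "bdd_above ((\<lambda>A. \<bar>measure \<mu>1 A - measure \<mu>2 A\<bar>) ` saturated_borel E)"
    unfolding bdd_above_def
  proof (intro exI[of _ 1] ballI)
    fix t assume "t \<in> (\<lambda>A. \<bar>measure \<mu>1 A - measure \<mu>2 A\<bar>) ` saturated_borel E"
    then obtain A where "t = \<bar>measure \<mu>1 A - measure \<mu>2 A\<bar>" by blast
    then show "t \<le> 1" using m1(1,2)[of A] m2(1,2)[of A] by linarith
  qed
  have le: "\<Phi> \<le> 1 - Inf M"
    unfolding \<Phi>_def
  proof (rule cSUP_least[OF Sne])
    fix A assume A: "A \<in> saturated_borel E"
    then have Ab: "A \<in> sets borel" and Asat: "\<forall>(x, y)\<in>E. (x \<in> A \<longleftrightarrow> y \<in> A)"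
      unfolding saturated_borel_def by auto
    have cov1: "E \<subseteq> A \<times> UNIV \<union> UNIV \<times> (- A)"
    proof
      fix p assume "p \<in> E"
      obtain x y where p: "p = (x, y)" by fastforce
      have "x \<in> A \<longleftrightarrow> y \<in> A" using Asat \<open>p \<in> E\<close> p by auto
      then show "p \<in> A \<times> UNIV \<union> UNIV \<times> (- A)" using p by auto
    qed
    have cov2: "E \<subseteq> (- A) \<times> UNIV \<union> UNIV \<times> A"
    proof
      fix p assume "p \<in> E"
      obtain x y where p: "p = (x, y)" by fastforce
      have "x \<in> A \<longleftrightarrow> y \<in> A" using Asat \<open>p \<in> E\<close> p by auto
      then show "p \<in> (- A) \<times> UNIV \<union> UNIV \<times> A" using p by auto
    qed
    have Acb: "- A \<in> sets borel" using Ab by auto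
    have "measure \<mu>1 A + measure \<mu>2 (- A) \<in> M"
      unfolding M_def by (rule CollectI, rule exI[of _ A], rule exI[of _ "- A"]) (use Ab Acb cov1 in simp)
    then have "Inf M \<le> measure \<mu>1 A + measure \<mu>2 (- A)" by (rule cInf_lower[OF _ Mbdd])
    then have i1: "Inf M \<le> measure \<mu>1 A + (1 - measure \<mu>2 A)" using m2(3)[OF Ab] by simp
    have "measure \<mu>1 (- A) + measure \<mu>2 A \<in> M"
      unfolding M_def by (rule CollectI, rule exI[of _ "- A"], rule exI[of _ A]) (use Ab Acb cov2 in simp)
    then have "Inf M \<le> measure \<mu>1 (- A) + measure \<mu>2 A" by (rule cInf_lower[OF _ Mbdd])
    then have i2: "Inf M \<le> (1 - measure \<mu>1 A) + measure \<mu>2 A" using m1(3)[OF Ab] by simp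
    show "\<bar>measure \<mu>1 A - measure \<mu>2 A\<bar> \<le> 1 - Inf M" using i1 i2 by linarith
  qed
  have ge: "1 - \<Phi> \<le> Inf M"
  proof (rule cInf_greatest[OF Mne])
    fix m assume "m \<in> M"
    then obtain B1 B2 where B: "m = measure \<mu>1 B1 + measure \<mu>2 B2" "B1 \<in> sets borel" "B2 \<in> sets borel"
      "E \<subseteq> (B1 \<times> UNIV) \<union> (UNIV \<times> B2)" unfolding M_def by blast
    have Cb: "- B1 \<in> sets borel" "- B2 \<in> sets borel" using B(2,3) by auto
    have noE: "(c, d) \<notin> E" if "c \<in> - B1" "d \<in> - B2" for c d using B(4) that by blast
    obtain A where A: "A \<in> saturated_borel E" "- B1 \<subseteq> A" "A \<inter> - B2 = {}"
      using invariant_sep[OF assms(1,2) Cb noE] by blast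
    have Ab: "A \<in> sets borel" using A(1) unfolding saturated_borel_def by auto
    have "measure \<mu>1 (- B1) \<le> measure \<mu>1 A" by (rule m1(4)[OF A(2) Ab])
    then have a1: "1 - measure \<mu>1 B1 \<le> measure \<mu>1 A" using m1(3)[OF B(2)] by simp
    have "A \<subseteq> B2" using A(3) by blast
    then have a2: "measure \<mu>2 A \<le> measure \<mu>2 B2" by (rule m2(4)[OF _ B(3)])
    have "\<bar>measure \<mu>1 A - measure \<mu>2 A\<bar> \<le> \<Phi>" unfolding \<Phi>_def by (rule cSUP_upper[OF A(1) Sbdd])
    then show "1 - \<Phi> \<le> m" using a1 a2 B(1) by linarith
  qed
  show ?thesis unfolding ci \<Phi>_def[symmetric] using le ge by linarith
qed

end
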